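(* Let $R$ be a commutative ring and $r\ge2$. Let $b^+=(b_1,\ldots,b_r)^t\in R^r$ be a unimodular column and let $b^-=(b_{-r},\ldots,b_{-1})^t\in R^r$ be a column such that $\sum_{i=1}^rb_ib_{-i}=0$. Then there exists $M\in\Theta(r,R)$ such that $b^-=Mb^+$.
   Context: A column is unimodular if its entries generate the unit ideal. For an $r\times r$ matrix $g$ with rows and columns indexed $1,\ldots,r$, its antidiagonal transpose $g^{\tau}$ has entries $(g^\tau)_{i,j}=g_{r+1-j,r+1-i}$. $\Theta(r,R)$ is the set of $r\times r$ matrices $M$ over $R$ with $M^{\tau}=-M$ and all antidiagonal entries $M_{i,r+1-i}$ equal to zero. Note the entries of $b^-$ are listed in the order $b_{-r},\ldots,b_{-1}$. *)

theory Defs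
  imports Main
begin

text \<open>Columns in R^r are functions nat => 'a, using the entries at indices 1..r.
  r x r matrices are functions nat => nat => 'a, using entries (i,j) with 1 <= i,j <= r.\<close>

definition unimodular :: "nat \<Rightarrow> (nat \<Rightarrow> 'a::comm_ring_1) \<Rightarrow> bool" where
  "unimodular r b \<longleftrightarrow> (\<exists>c. (\<Sum>i=1..r. c i * b i) = 1)"

definition antidiag_transpose :: "nat \<Rightarrow> (nat \<Rightarrow> nat \<Rightarrow> 'a) \<Rightarrow> (nat \<Rightarrow> nat \<Rightarrow> 'a)" where
  "antidiag_transpose r g = (\<lambda>i j. g (r + 1 - j) (r + 1 - i))"

definition Theta :: "nat \<Rightarrow> (nat \<Rightarrow> nat \<Rightarrow> 'a::comm_ring_1) set" where
  "Theta r = {M. (\<forall>i\<in>{1..r}. \<forall>j\<in>{1..r}. antidiag_transpose r M i j = - M i j)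
                \<and> (\<forall>i\<in>{1..r}. M i (r + 1 - i) = 0)}"

definition mat_vec :: "nat \<Rightarrow> (nat \<Rightarrow> nat \<Rightarrow> 'a::comm_ring_1) \<Rightarrow> (nat \<Rightarrow> 'a) \<Rightarrow> nat \<Rightarrow> 'a" where
  "mat_vec r M v = (\<lambda>i. \<Sum>j=1..r. M i j * v j)"

end

theory Submission
  imports Defs
begin

theorem lemma9:
  fixes r :: nat and bp bm :: "nat \<Rightarrow> 'a::comm_ring_1"
  assumes "r \<ge> 2"
    and "unimodular r bp"
    and "(\<Sum>i=1..r. bp i * bm (r + 1 - i)) = 0"
  shows "\<exists>M \<in> Theta r. \<forall>i\<in>{1..r}. bm i = mat_vec r M bp i"
proof -
  obtain c where c: "(\<Sum>i=1..r. c i * bp i) = 1" using assms(2) unfolding unimodular_def by blast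
  define M where "M = (\<lambda>i j. bm i * c j - bm (r + 1 - j) * c (r + 1 - i))"
  have "M \<in> Theta r"
    unfolding Theta_def antidiag_transpose_def M_def
    by (auto simp: algebra_simps)
  moreover have "bm i = mat_vec r M bp i" for i
  proof -
    have "mat_vec r M bp i = (\<Sum>j=1..r. bm i * (c j * bp j) - c (r + 1 - i) * (bp j * bm (r + 1 - j)))"
      unfolding mat_vec_def M_def by (rule sum.cong) (auto simp: algebra_simps)
    also have "\<dots> = bm i * (\<Sum>j=1..r. c j * bp j) - c (r + 1 - i) * (\<Sum>j=1..r. bp j * bm (r + 1 - j))"
      by (simp add: sum_subtractf sum_distrib_left)
    also have "\<dots> = bm i" using c assms(3) by simp
    finally show ?thesis by simp
  qed
  ultimately show ?thesis by blast
qed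

end
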